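(* Realize $\mathrm{SO}(3)\times\mathbb{R}$ as the group of $4\times4$ matrices $(C,v)=\begin{pmatrix}C&0\\0&e^v\end{pmatrix}$, $C\in\mathrm{SO}(3)$, $v\in\mathbb{R}$, and let $E_1=e_{32}-e_{23}$, $E_2=e_{13}-e_{31}$, $E_3=e_{21}-e_{12}$, $E_4=e_{44}$ ($e_{jk}$ the $4\times4$ matrix units), $e_1=E_1$, $e_2=E_4-E_3$, $e_3=E_2$, $e_4=E_3$. For $\alpha_1^2+\alpha_2^2+\alpha_3^2=1$, $\beta\in\mathbb{R}$ let $$\gamma_1(t)=\gamma_1(\alpha_1,\alpha_2,\alpha_3,\beta;t)=\exp\bigl(t(\alpha_1e_1+\alpha_2e_2+\alpha_3e_3+\beta e_4)\bigr)\exp(-t\beta e_4)$$ (the arclength geodesics through $\mathrm{Id}$ of the left-invariant sub-Riemannian metric $\rho_1$ defined by $\mathrm{span}(e_1,e_2,e_3)$ with orthonormal basis $e_1,e_2,e_3$). Put $w_1=\sqrt{1-\alpha_2^2+(\beta-\alpha_2)^2}$, $\mu_1=\frac{\sin w_1t}{w_1}$, $\nu_1=\frac{1-\cos w_1t}{w_1^2}$, and $\delta=\beta-\alpha_2$. If $\alpha_2\neq\pm1$, then $\gamma_1(t)=(C,v)(t)$ with $v(t)=\alpha_2t$ and the columns of $C(t)\in\mathrm{SO}(3)$ given by $$C_1=\begin{pmatrix}(1-\nu_1(\alpha_3^2+\delta^2))\cos\beta t-(\alpha_1\alpha_3\nu_1-\delta\mu_1)\sin\beta t\\ (\alpha_1\alpha_3\nu_1+\delta\mu_1)\cos\beta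 t-(1-\nu_1(\alpha_1^2+\delta^2))\sin\beta t\\ (\alpha_1\delta\nu_1-\alpha_3\mu_1)\cos\beta t-(\alpha_3\delta\nu_1+\alpha_1\mu_1)\sin\beta t\end{pmatrix},$$ $$C_2=\begin{pmatrix}(1-\nu_1(\alpha_3^2+\delta^2))\sin\beta t+(\alpha_1\alpha_3\nu_1-\delta\mu_1)\cos\beta t\\ (\alpha_1\alpha_3\nu_1+\delta\mu_1)\sin\beta t+(1-\nu_1(\alpha_1^2+\delta^2))\cos\beta t\\ (\alpha_1\delta\nu_1-\alpha_3\mu_1)\sin\beta t+(\alpha_3\delta\nu_1+\alpha_1\mu_1)\cos\beta t\end{pmatrix},\quad C_3=\begin{pmatrix}\alpha_1\delta\nu_1+\alpha_3\mu_1\\ \alpha_3\delta\nu_1-\alpha_1\mu_1\\ 1-\nu_1(\alpha_1^2+\alpha_3^2)\end{pmatrix}.$$ If $\alpha_2=\pm1$, then $\gamma_1(t)=(C,v)(t)$ with $v(t)=\alpha_2t$ and $C(t)=\begin{pmatrix}\cos\alpha_2t&\sin\alpha_2t&0\\-\sin\alpha_2t&\cos\alpha_2t&0\\0&0&1\end{pmatrix}$.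
   Context: The matrices $E_1,\dots,E_4$ satisfy $[E_1,E_2]=E_3$, $[E_2,E_3]=E_1$, $[E_3,E_1]=E_2$, $[E_i,E_4]=0$. *)

theory Defs
  imports "HOL-Analysis.Analysis"
begin

text \<open>Matrix powers and the matrix exponential for square real matrices
  (the built-in exp on real^n^n would be componentwise, so we define it).\<close>

primrec matpow :: "real^'n^'n \<Rightarrow> nat \<Rightarrow> real^'n^'n" where
  "matpow A 0 = mat 1"
| "matpow A (Suc k) = A ** matpow A k"

definition mexp :: "real^'n^'n \<Rightarrow> real^'n^'n" where
  "mexp A = (\<Sum>k. (1 / fact k) *\<^sub>R matpow A k)"

definition munit :: "4 \<Rightarrow> 4 \<Rightarrow> real^4^4" where
  "munit j k = (\<chi> a b. if a = j \<and> b = k then 1 else 0)"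

definition E1 :: "real^4^4" where "E1 = munit 3 2 - munit 2 3"
definition E2 :: "real^4^4" where "E2 = munit 1 3 - munit 3 1"
definition E3 :: "real^4^4" where "E3 = munit 2 1 - munit 1 2"
definition E4 :: "real^4^4" where "E4 = munit 4 4"

definition e1 :: "real^4^4" where "e1 = E1"
definition e2 :: "real^4^4" where "e2 = E4 - E3"
definition e3 :: "real^4^4" where "e3 = E2"
definition e4 :: "real^4^4" where "e4 = E3"

definition gamma1 :: "real \<Rightarrow> real \<Rightarrow> real \<Rightarrow> real \<Rightarrow> real \<Rightarrow> real^4^4" where
  "gamma1 a1 a2 a3 b t =
     mexp (t *\<^sub>R (a1 *\<^sub>R e1 + a2 *\<^sub>R e2 + a3 *\<^sub>R e3 + b *\<^sub>R e4)) ** mexp ((- t * b) *\<^sub>R e4)"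

text \<open>Index map from {1,2,3} in type 4 to type 3 (only used on those indices).\<close>

definition ix3 :: "4 \<Rightarrow> 3" where
  "ix3 i = (if i = 1 then 1 else if i = 2 then 2 else 3)"

definition pairCv :: "real^3^3 \<Rightarrow> real \<Rightarrow> real^4^4" where
  "pairCv C v = (\<chi> i j. if i = 4 \<and> j = 4 then exp v
                        else if i = 4 \<or> j = 4 then 0
                        else C $ ix3 i $ ix3 j)"

definition cols3 :: "real^3 \<Rightarrow> real^3 \<Rightarrow> real^3 \<Rightarrow> real^3^3" where
  "cols3 c1 c2 c3 = transpose (vector [c1, c2, c3])"

end

theory Submission
  imports Defs
begin


lemma smult_mm: fixes A B :: "real^'n^'n"
  shows "(a *\<^sub>R A) ** (b *\<^sub>R B) = (a*b) *\<^sub>R (A ** B)"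
  by (simp add: matrix_matrix_mult_def vec_eq_iff sum_distrib_left mult_ac)

lemma mm_sR: fixes A B :: "real^'n^'n"
  shows "A ** (t *\<^sub>R B) = t *\<^sub>R (A ** B)" "(t *\<^sub>R A) ** B = t *\<^sub>R (A ** B)"
  by (simp_all add: matrix_matrix_mult_def vec_eq_iff sum_distrib_left mult_ac)

lemma mm_add_r: fixes A B C :: "real^'n^'n"
  shows "(A + B) ** C = A ** C + B ** C"
  by (simp add: matrix_matrix_mult_def vec_eq_iff sum.distrib algebra_simps)

lemma matpow_tX:
  fixes X :: "real^'n^'n"
  assumes X3: "X ** (X ** X) = (-(w^2)) *\<^sub>R X"
  shows "matpow (t *\<^sub>R X) (2*j+1) = (t^(2*j+1) * (-(w^2))^j) *\<^sub>R X \<and>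
         matpow (t *\<^sub>R X) (2*j+2) = (t^(2*j+2) * (-(w^2))^j) *\<^sub>R (X ** X)"
proof (induction j)
  case 0
  show ?case by (simp add: smult_mm power2_eq_square)
next
  case (Suc j)
  have o: "matpow (t *\<^sub>R X) (2*Suc j+1) = (t^(2*Suc j+1) * (-(w^2))^Suc j) *\<^sub>R X"
  proof -
    have "2*Suc j+1 = Suc (2*j+2)" by simp
    then have "matpow (t *\<^sub>R X) (2*Suc j+1) = (t *\<^sub>R X) ** matpow (t *\<^sub>R X) (2*j+2)"
      by (simp only: matpow.simps)
    also have "\<dots> = (t * (t^(2*j+2) * (-(w^2))^j)) *\<^sub>R (X ** (X ** X))"
      using Suc.IH by (simp add: smult_mm)
    also have "\<dots> = (t^(2*Suc j+1) * (-(w^2))^Suc j) *\<^sub>R X"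
      by (simp add: X3 algebra_simps power_add)
    finally show ?thesis .
  qed
  have "2*Suc j+2 = Suc (2*Suc j+1)" by simp
  then have e: "matpow (t *\<^sub>R X) (2*Suc j+2) = (t *\<^sub>R X) ** matpow (t *\<^sub>R X) (2*Suc j+1)"
    by (simp only: matpow.simps)
  also have "\<dots> = (t * (t^(2*Suc j+1) * (-(w^2))^Suc j)) *\<^sub>R (X ** X)"
    by (simp only: o smult_mm)
  also have "\<dots> = (t^(2*Suc j+2) * (-(w^2))^Suc j) *\<^sub>R (X ** X)"
    by (rule arg_cong[where f="\<lambda>a. a *\<^sub>R (X**X)"]) (simp add: algebra_simps)
  finally show ?case using o by simp
qed

lemma matpow_split:
  fixes X P :: "real^'n^'n"
  assumes "X ** P = 0" "P ** X = 0" "P ** P = P"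
  shows "matpow (X + c *\<^sub>R P) (Suc k) = matpow X (Suc k) + c^(Suc k) *\<^sub>R P"
proof (induction k)
  case 0
  then show ?case by simp
next
  case (Suc k)
  have PX: "P ** (X ** matpow X k) = 0"
    by (simp add: matrix_mul_assoc assms)
  have XP: "X ** P = 0" by (rule assms)
  have "matpow (X + c *\<^sub>R P) (Suc (Suc k)) = (X + c *\<^sub>R P) ** (matpow X (Suc k) + c^(Suc k) *\<^sub>R P)"
    using Suc.IH by simp
  also have "\<dots> = matpow X (Suc (Suc k)) + c^(Suc (Suc k)) *\<^sub>R P"
    by (simp add: matrix_add_ldistrib mm_add_r matrix_scalar_ac scalar_matrix_assoc[symmetric] PX XP assms(3))
  finally show ?case .
qed

lemma sc_lem: fixes w t :: real assumes w: "w \<noteq> 0"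
  shows "sin_coeff (2*j+1) * (w*t)^(2*j+1) / w = 1 / fact (2*j+1) * (t^(2*j+1) * (-(w^2))^j)"
proof -
  have a: "sin_coeff (2*j+1) = (-1)^j / fact (2*j+1)" by (simp add: sin_coeff_def)
  have b: "(w*t)^(2*j+1) = w * (w^(2*j) * t^(2*j+1))"
    by (metis mult.assoc mult.commute power_Suc power_mult_distrib Suc_eq_plus1)
  have c: "(-(w^2))^j = (-1)^j * w^(2*j)" by (metis power_minus power_mult)
  show ?thesis unfolding a b c using w by simp
qed
lemma cc_lem: fixes w t :: real assumes w: "w \<noteq> 0"
  shows "-(cos_coeff (2*j+2) * (w*t)^(2*j+2)) / w^2 = 1 / fact (2*j+2) * (t^(2*j+2) * (-(w^2))^j)"
proof -
  have a: "cos_coeff (2*j+2) = -((-1)^j / fact (2*j+2))" by (simp add: cos_coeff_def)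
  have b: "(w*t)^(2*j+2) = w^2 * (w^(2*j) * t^(2*j+2))"
    by (simp add: power_mult_distrib power_add power2_eq_square)
  have c: "(-(w^2))^j = (-1)^j * w^(2*j)" by (metis power_minus power_mult)
  show ?thesis unfolding a b c using w by simp
qed

lemma mexp_formula:
  fixes X P :: "real^'n^'n"
  assumes X3: "X ** (X ** X) = (-(w^2)) *\<^sub>R X"
    and XP: "X ** P = 0" and PX: "P ** X = 0" and PP: "P ** P = P" and w: "w \<noteq> 0"
  shows "mexp (t *\<^sub>R X + c *\<^sub>R P) = mat 1 + (sin (w*t)/w) *\<^sub>R X
           + ((1 - cos (w*t))/w^2) *\<^sub>R (X ** X) + (exp c - 1) *\<^sub>R P"
proof -
  define T where "T k = (sin_coeff k * (w*t)^k / w) *\<^sub>R X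
     + (-(cos_coeff k * (w*t)^k) / w^2) *\<^sub>R (X**X) + (c^k / fact k) *\<^sub>R P
     + (if k = 0 then mat 1 - P + (1/w^2) *\<^sub>R (X**X) else 0)" for k
  have XP': "(t *\<^sub>R X) ** P = 0" "P ** (t *\<^sub>R X) = 0"
    by (simp_all add: mm_sR XP PX)
  have split: "matpow (t *\<^sub>R X + c *\<^sub>R P) (Suc k) = matpow (t *\<^sub>R X) (Suc k) + c^(Suc k) *\<^sub>R P" for k
    by (rule matpow_split[OF XP' PP])
  have eq: "(1 / fact k) *\<^sub>R matpow (t *\<^sub>R X + c *\<^sub>R P) k = T k" for k
  proof -
    consider "k = 0" | j where "k = 2*j+1" | j where "k = 2*j+2"
  proof -
      have "k = 0 \<or> k = 2*(k div 2)+1 \<or> k = 2*(k div 2 - 1)+(2::nat)" by arith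
      then show ?thesis using that by blast
    qed
    then show ?thesis
    proof cases
      case 1
      then show ?thesis by (simp add: T_def)
    next
      case 2
      have m: "matpow (t *\<^sub>R X) k = (t^(2*j+1) * (-(w^2))^j) *\<^sub>R X"
        using conjunct1[OF matpow_tX[OF X3, of t j]] 2 by (simp only:)
      have sc: "sin_coeff k * (w*t)^k / w = 1 / fact k * (t^(2*j+1) * (-(w^2))^j)"
        using sc_lem[OF w] 2 by simp
      have cc: "cos_coeff k = 0" using 2 by (simp add: cos_coeff_def)
      have "(1 / fact k) *\<^sub>R matpow (t *\<^sub>R X + c *\<^sub>R P) k
          = (1 / fact k * (t^(2*j+1) * (-(w^2))^j)) *\<^sub>R X + (c^k / fact k) *\<^sub>R P"
        using split[of "2*j"] 2 m by (simp add: scaleR_add_right)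
      then show ?thesis unfolding T_def sc cc using 2 by simp
    next
      case 3
      have m: "matpow (t *\<^sub>R X) k = (t^(2*j+2) * (-(w^2))^j) *\<^sub>R (X ** X)"
        using conjunct2[OF matpow_tX[OF X3, of t j]] 3 by (simp only:)
      have cc: "-(cos_coeff k * (w*t)^k) / w^2 = 1 / fact k * (t^(2*j+2) * (-(w^2))^j)"
        using cc_lem[OF w] 3 by simp
      have sc: "sin_coeff k = 0" using 3 by (simp add: sin_coeff_def)
      have "(1 / fact k) *\<^sub>R matpow (t *\<^sub>R X + c *\<^sub>R P) k
          = (1 / fact k * (t^(2*j+2) * (-(w^2))^j)) *\<^sub>R (X ** X) + (c^k / fact k) *\<^sub>R P"
        using split[of "2*j+1"] 3 m by (simp add: scaleR_add_right)
      then show ?thesis unfolding T_def sc cc using 3 by simp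
    qed
  qed
  have s1: "(\<lambda>k. (sin_coeff k * (w*t)^k / w) *\<^sub>R X) sums ((sin (w*t) / w) *\<^sub>R X)"
    using bounded_linear.sums[OF bounded_linear_scaleR_left sums_divide[OF sin_converges[of "w*t"]]]
    by simp
  have s2: "(\<lambda>k. (-(cos_coeff k * (w*t)^k) / w^2) *\<^sub>R (X**X)) sums ((- cos (w*t) / w^2) *\<^sub>R (X**X))"
    using bounded_linear.sums[OF bounded_linear_scaleR_left sums_divide[OF sums_minus[OF cos_converges[of "w*t"]]]]
    by simp
  have s3: "(\<lambda>k. (c^k / fact k) *\<^sub>R P) sums (exp c *\<^sub>R P)"
    using bounded_linear.sums[OF bounded_linear_scaleR_left exp_converges[of c]]
    by (simp add: divide_inverse mult.commute)
  have s4: "(\<lambda>k. if k = 0 then mat 1 - P + (1/w^2) *\<^sub>R (X**X) else 0) sums (mat 1 - P + (1/w^2) *\<^sub>R (X**X))"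
    using sums_single[of 0 "\<lambda>_. mat 1 - P + (1/w^2) *\<^sub>R (X**X)"] by simp
  have "T sums ((sin (w*t) / w) *\<^sub>R X + (- cos (w*t) / w^2) *\<^sub>R (X**X) + exp c *\<^sub>R P
                + (mat 1 - P + (1/w^2) *\<^sub>R (X**X)))"
    unfolding T_def by (intro sums_add s1 s2 s3 s4)
  moreover have "(sin (w*t) / w) *\<^sub>R X + (- cos (w*t) / w^2) *\<^sub>R (X**X) + exp c *\<^sub>R P
                + (mat 1 - P + (1/w^2) *\<^sub>R (X**X)) = mat 1 + (sin (w*t)/w) *\<^sub>R X
           + ((1 - cos (w*t))/w^2) *\<^sub>R (X ** X) + (exp c - 1) *\<^sub>R P"
    by (simp add: algebra_simps diff_divide_distrib)
  ultimately have "T sums (mat 1 + (sin (w*t)/w) *\<^sub>R X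
           + ((1 - cos (w*t))/w^2) *\<^sub>R (X ** X) + (exp c - 1) *\<^sub>R P)" by (simp only:)
  then show ?thesis unfolding mexp_def using eq sums_unique by (metis (no_types, lifting) ext)
qed



lemma E_prods:
  "E1 ** E4 = 0" "E2 ** E4 = 0" "E3 ** E4 = 0" "E4 ** E1 = 0" "E4 ** E2 = 0" "E4 ** E3 = 0" "E4 ** E4 = E4"
  by (simp_all add: E1_def E2_def E3_def E4_def munit_def vec_eq_iff matrix_matrix_mult_def forall_4 sum_4)

lemma X3_lem:
  fixes a1 a3 d :: real
  defines "X \<equiv> a1 *\<^sub>R E1 + a3 *\<^sub>R E2 + d *\<^sub>R E3"
  shows "X ** (X ** X) = (-(a1^2+a3^2+d^2)) *\<^sub>R X"
  by (simp add: X_def E1_def E2_def E3_def E4_def munit_def vec_eq_iff matrix_matrix_mult_def forall_4 sum_4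
       algebra_simps power2_eq_square)

lemma XP_lem:
  fixes a1 a3 d :: real
  defines "X \<equiv> a1 *\<^sub>R E1 + a3 *\<^sub>R E2 + d *\<^sub>R E3"
  shows "X ** E4 = 0" "E4 ** X = 0"
  by (simp_all add: X_def matrix_add_ldistrib mm_add_r mm_sR E_prods)

lemma arg_lem: "t *\<^sub>R (a1 *\<^sub>R e1 + a2 *\<^sub>R e2 + a3 *\<^sub>R e3 + b *\<^sub>R e4)
   = t *\<^sub>R (a1 *\<^sub>R E1 + a3 *\<^sub>R E2 + (b - a2) *\<^sub>R E3) + (t*a2) *\<^sub>R E4"
  by (simp add: e1_def e2_def e3_def e4_def algebra_simps)

lemma arg2_lem: "(- t * b) *\<^sub>R e4 = (-t*b) *\<^sub>R E3 + 0 *\<^sub>R (0::real^4^4)"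
  by (simp add: e4_def)

lemma E3_3: "E3 ** (E3 ** E3) = (-(1^2)) *\<^sub>R E3"
  by (simp add: E3_def munit_def vec_eq_iff matrix_matrix_mult_def forall_4 sum_4)

lemma mexp2: "mexp ((- t * b) *\<^sub>R e4) = mat 1 + sin (-t*b) *\<^sub>R E3 + (1 - cos (-t*b)) *\<^sub>R (E3 ** E3)"
  using mexp_formula[OF E3_3, of 0 "-t*b" 0] unfolding arg2_lem by simp

lemma mexp1:
  assumes w: "w \<noteq> 0" and ww: "w^2 = a1^2+a3^2+d^2"
  shows "mexp (t *\<^sub>R (a1 *\<^sub>R E1 + a3 *\<^sub>R E2 + d *\<^sub>R E3) + (t*a2) *\<^sub>R E4)
    = mat 1 + (sin (w*t)/w) *\<^sub>R (a1 *\<^sub>R E1 + a3 *\<^sub>R E2 + d *\<^sub>R E3)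
      + ((1 - cos (w*t))/w^2) *\<^sub>R ((a1 *\<^sub>R E1 + a3 *\<^sub>R E2 + d *\<^sub>R E3) ** (a1 *\<^sub>R E1 + a3 *\<^sub>R E2 + d *\<^sub>R E3))
      + (exp (t*a2) - 1) *\<^sub>R E4"
proof -
  have X3: "(a1 *\<^sub>R E1 + a3 *\<^sub>R E2 + d *\<^sub>R E3) ** ((a1 *\<^sub>R E1 + a3 *\<^sub>R E2 + d *\<^sub>R E3) ** (a1 *\<^sub>R E1 + a3 *\<^sub>R E2 + d *\<^sub>R E3))
      = (-(w^2)) *\<^sub>R (a1 *\<^sub>R E1 + a3 *\<^sub>R E2 + d *\<^sub>R E3)"
    unfolding ww by (rule X3_lem)
  show ?thesis by (rule mexp_formula[OF X3 XP_lem E_prods(7) w])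
qed

lemma main_eq:
  fixes a1 a2 a3 b t w mu nu d :: real
  assumes w: "w \<noteq> 0" and ww: "w^2 = a1^2+a3^2+d^2"
    and mu: "mu = sin (w * t) / w" and nu: "nu = (1 - cos (w * t)) / w\<^sup>2" and d: "d = b - a2"
  shows "gamma1 a1 a2 a3 b t = pairCv (cols3
                  (vector [(1 - nu * (a3\<^sup>2 + d\<^sup>2)) * cos (b * t) - (a1 * a3 * nu - d * mu) * sin (b * t),
                           (a1 * a3 * nu + d * mu) * cos (b * t) - (1 - nu * (a1\<^sup>2 + d\<^sup>2)) * sin (b * t),
                           (a1 * d * nu - a3 * mu) * cos (b * t) - (a3 * d * nu + a1 * mu) * sin (b * t)])
                  (vector [(1 - nu * (a3\<^sup>2 + d\<^sup>2)) * sin (b * t) + (a1 * a3 * nu - d * mu) * cos (b * t),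
                           (a1 * a3 * nu + d * mu) * sin (b * t) + (1 - nu * (a1\<^sup>2 + d\<^sup>2)) * cos (b * t),
                           (a1 * d * nu - a3 * mu) * sin (b * t) + (a3 * d * nu + a1 * mu) * cos (b * t)])
                  (vector [a1 * d * nu + a3 * mu,
                           a3 * d * nu - a1 * mu,
                           1 - nu * (a1\<^sup>2 + a3\<^sup>2)])) (a2 * t)"
  unfolding gamma1_def arg_lem mexp2 d[symmetric] mexp1[OF w ww] mu[symmetric] nu[symmetric]
  by (simp add: E1_def E2_def E3_def E4_def munit_def vec_eq_iff matrix_matrix_mult_def forall_4 sum_4
       pairCv_def ix3_def cols3_def transpose_def mat_def algebra_simps power2_eq_square)



lemma rot_main:
  fixes a1 a3 d mu nu cb sb :: real
  assumes K: "2*nu - mu^2 - nu^2*(a1^2+a3^2+d^2) = 0" and P: "sb^2 + cb^2 = 1"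
  shows "rotation_matrix (cols3
                  (vector [(1 - nu * (a3\<^sup>2 + d\<^sup>2)) * cb - (a1 * a3 * nu - d * mu) * sb,
                           (a1 * a3 * nu + d * mu) * cb - (1 - nu * (a1\<^sup>2 + d\<^sup>2)) * sb,
                           (a1 * d * nu - a3 * mu) * cb - (a3 * d * nu + a1 * mu) * sb])
                  (vector [(1 - nu * (a3\<^sup>2 + d\<^sup>2)) * sb + (a1 * a3 * nu - d * mu) * cb,
                           (a1 * a3 * nu + d * mu) * sb + (1 - nu * (a1\<^sup>2 + d\<^sup>2)) * cb,
                           (a1 * d * nu - a3 * mu) * sb + (a3 * d * nu + a1 * mu) * cb])
                  (vector [a1 * d * nu + a3 * mu,
                           a3 * d * nu - a1 * mu,
                           1 - nu * (a1\<^sup>2 + a3\<^sup>2)]))"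
  unfolding rotation_matrix_def orthogonal_matrix_def
  apply (simp add: vec_eq_iff forall_3 sum_3 det_3 cols3_def transpose_def matrix_matrix_mult_def mat_def)
  using K P
  apply (intro conjI)
  apply algebra+
  done


lemma pm_eq:
  fixes a2 b t :: real
  shows "gamma1 0 a2 0 b t = pairCv (vector [vector [cos (a2 * t), sin (a2 * t), 0],
                             vector [- sin (a2 * t), cos (a2 * t), 0],
                             vector [0, 0, 1]] :: real^3^3) (a2 * t)"
proof -
  define d where "d = b - a2"
  have ar: "t *\<^sub>R (0 *\<^sub>R E1 + 0 *\<^sub>R E2 + d *\<^sub>R E3) + (t*a2) *\<^sub>R E4 = (t*d) *\<^sub>R E3 + (t*a2) *\<^sub>R E4"
    by simp
  have m1: "mexp ((t*d) *\<^sub>R E3 + (t*a2) *\<^sub>R E4) = mat 1 + sin (t*d) *\<^sub>R E3 + (1 - cos (t*d)) *\<^sub>R (E3 ** E3)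
      + (exp (t*a2) - 1) *\<^sub>R E4"
    using mexp_formula[OF E3_3 E_prods(3) E_prods(6) E_prods(7), of "t*d" "t*a2"] by simp
  have c: "cos (a2 * t) = cos (t*b) * cos (t*d) + sin (t*b) * sin (t*d)"
    unfolding cos_diff[symmetric] d_def by (simp add: algebra_simps)
  have s: "sin (a2 * t) = sin (t*b) * cos (t*d) - cos (t*b) * sin (t*d)"
    unfolding sin_diff[symmetric] d_def by (simp add: algebra_simps)
  show ?thesis
    unfolding gamma1_def arg_lem mexp2 d_def[symmetric] ar m1 c s
    by (simp add: E1_def E2_def E3_def E4_def munit_def vec_eq_iff matrix_matrix_mult_def forall_4 sum_4
       pairCv_def ix3_def mat_def algebra_simps power2_eq_square)
qed

lemma pm_rot: "rotation_matrix (vector [vector [cos x, sin x, 0],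
                             vector [- sin x, cos x, 0],
                             vector [0, 0, 1]] :: real^3^3)"
  unfolding rotation_matrix_def orthogonal_matrix_def
  by (simp add: vec_eq_iff forall_3 sum_3 det_3 transpose_def matrix_matrix_mult_def mat_def
      power2_eq_square[symmetric])

lemma K_lem:
  fixes w t :: real assumes "w \<noteq> 0"
  shows "2*((1 - cos (w * t)) / w\<^sup>2) - (sin (w * t) / w)^2 - ((1 - cos (w * t)) / w\<^sup>2)^2*(w^2) = 0"
proof -
  have h: "sin (t*w) * sin (t*w) = 1 - cos (t*w) * cos (t*w)"
    using sin_squared_eq[of "t*w"] by (simp add: power2_eq_square)
  show ?thesis using assms by (simp add: field_simps power2_eq_square, simp add: h algebra_simps)
qed

theorem theorem8:
  fixes a1 a2 a3 b t :: real
  assumes "a1\<^sup>2 + a2\<^sup>2 + a3\<^sup>2 = 1"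
  shows "(a2 \<noteq> 1 \<and> a2 \<noteq> -1 \<longrightarrow>
           (let w = sqrt (1 - a2\<^sup>2 + (b - a2)\<^sup>2);
                mu = sin (w * t) / w;
                nu = (1 - cos (w * t)) / w\<^sup>2;
                d = b - a2;
                C = cols3
                  (vector [(1 - nu * (a3\<^sup>2 + d\<^sup>2)) * cos (b * t) - (a1 * a3 * nu - d * mu) * sin (b * t),
                           (a1 * a3 * nu + d * mu) * cos (b * t) - (1 - nu * (a1\<^sup>2 + d\<^sup>2)) * sin (b * t),
                           (a1 * d * nu - a3 * mu) * cos (b * t) - (a3 * d * nu + a1 * mu) * sin (b * t)])
                  (vector [(1 - nu * (a3\<^sup>2 + d\<^sup>2)) * sin (b * t) + (a1 * a3 * nu - d * mu) * cos (b * t),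
                           (a1 * a3 * nu + d * mu) * sin (b * t) + (1 - nu * (a1\<^sup>2 + d\<^sup>2)) * cos (b * t),
                           (a1 * d * nu - a3 * mu) * sin (b * t) + (a3 * d * nu + a1 * mu) * cos (b * t)])
                  (vector [a1 * d * nu + a3 * mu,
                           a3 * d * nu - a1 * mu,
                           1 - nu * (a1\<^sup>2 + a3\<^sup>2)])
            in rotation_matrix C \<and> gamma1 a1 a2 a3 b t = pairCv C (a2 * t)))
       \<and> (a2 = 1 \<or> a2 = -1 \<longrightarrow>
           (let C = (vector [vector [cos (a2 * t), sin (a2 * t), 0],
                             vector [- sin (a2 * t), cos (a2 * t), 0],
                             vector [0, 0, 1]] :: real^3^3)
            in rotation_matrix C \<and> gamma1 a1 a2 a3 b t = pairCv C (a2 * t)))"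
using assms
  apply (intro conjI impI)
  subgoal premises prems
  proof -
    have A: "a1^2+a3^2 = 1 - a2^2" using prems by simp
    have h: "a2 \<noteq> 1 \<and> a2 \<noteq> -1" using prems by simp
    define w where "w = sqrt (1 - a2\<^sup>2 + (b - a2)\<^sup>2)"
    have nn: "0 \<le> 1 - a2\<^sup>2 + (b - a2)\<^sup>2" unfolding A[symmetric] by simp
    have ww: "w^2 = a1^2+a3^2+(b-a2)^2" unfolding w_def using nn A by simp
    have w0: "w \<noteq> 0"
    proof
      assume "w = 0"
      then have "a1^2+a3^2+(b-a2)^2 = 0" using ww by simp
      then have "a1^2+a3^2 = 0" by (smt (verit) zero_le_power2)
      then have "a2^2 = 1" using A by simp
      then show False using h power2_eq_1_iff by blast
    qed
    have K: "2*((1 - cos (w * t)) / w\<^sup>2) - (sin (w * t) / w)^2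
        - ((1 - cos (w * t)) / w\<^sup>2)^2*(a1^2+a3^2+(b-a2)^2) = 0"
      using K_lem[OF w0, of t] unfolding ww by simp
    show ?thesis
      unfolding Let_def w_def[symmetric]
      by (intro conjI rot_main[OF K] sin_cos_squared_add main_eq[OF w0 ww refl refl refl])
  qed
  subgoal premises prems
  proof -
    have A: "a1^2+a3^2 = 1 - a2^2" using prems by simp
    have "a2^2 = 1" using prems by auto
    then have "a1^2+a3^2 = 0" using A by simp
    then have z: "a1 = 0" "a3 = 0" by (simp_all add: sum_power2_eq_zero_iff)
    show ?thesis
      unfolding Let_def z by (intro conjI pm_rot pm_eq)
  qed
  done

end
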